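(* Fix $a\in(0,2)$ and $\alpha\in[0,1]$, and let $\varepsilon=n^{-a}$. Let $S,S'\in\mathcal{O}^{\varepsilon,2}_{\alpha N}$ and let $\mathbf{S}$ have distribution $\mathbb{R}(n,\alpha N)$. Then \[ \frac{\Pr(\mathbf{S}=S)}{\Pr(\mathbf{S}=S')}\le\exp\left(O\left(n^{2-a}\right)\right). \]
   Context: Throughout, $n\equiv1$ or $3\pmod 6$, $N=\binom n2/3$, $\alpha N$ is treated as an integer, and asymptotics are as $n\to\infty$. A partial system is a 3-uniform hypergraph on $[n]$ in which every pair lies in at most one hyperedge; $\mathcal{O}_m$ is the set of ordered partial systems with $m$ hyperedges and $S_i$ the first $i$ hyperedges of $S$. $G(S)$ is the graph on $[n]$ of pairs not covered by hyperedges of $S$. For a graph $G$ with $n$ vertices and $m$ edges, $d(G)=m/\binom n2$, and $G$ is $(\varepsilon,h)$-quasirandom if every set $A$ of at most $h$ vertices satisfies $\left|\bigcap_{w\in A}N_G(w)\right|=(1\pm\varepsilon)d(G)^{|A|}n$. $\mathcal{O}^{\varepsilon,h}_m$ is the set of $S\in\mathcal{O}_m$ with $G(S_i)$ $(\varepsilon,h)$-quasirandom for all $i\le m$. The triangle removal process starts from $K_n$ and repeatedly removes the edges of a uniformly random triangle of the current graph; $\mathbb{R}(n,m)$ is the distribution of the ordered sequence of the first $m$ removed triangles (an element of $\mathcal{O}_m$), or the symbol $*$ if the process runs out of triangles before $m$ steps. *)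

theory Defs
  imports "HOL-Probability.Probability"
begin

definition pairs_of :: "nat set \<Rightarrow> nat set set" where
  "pairs_of T = {e. e \<subseteq> T \<and> card e = 2}"

definition Nsys :: "nat \<Rightarrow> nat" where
  "Nsys n = (n choose 2) div 3"

definition ordered_systems :: "nat \<Rightarrow> nat \<Rightarrow> nat set list set" where
  "ordered_systems n m = {S. length S = m
      \<and> (\<forall>i<m. S ! i \<subseteq> {1..n} \<and> card (S ! i) = 3)
      \<and> (\<forall>i<m. \<forall>j<m. i \<noteq> j \<longrightarrow> card (S ! i \<inter> S ! j) \<le> 1)}"

definition uncovered :: "nat \<Rightarrow> nat set list \<Rightarrow> nat set set" where
  "uncovered n S = pairs_of {1..n} - (\<Union>T\<in>set S. pairs_of T)"

definition density :: "nat \<Rightarrow> nat set set \<Rightarrow> real" where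
  "density n G = real (card G) / real (n choose 2)"

definition common_nbhd :: "nat \<Rightarrow> nat set set \<Rightarrow> nat set \<Rightarrow> nat set" where
  "common_nbhd n G A = {v \<in> {1..n}. \<forall>w\<in>A. {v, w} \<in> G}"

definition quasirandom :: "nat \<Rightarrow> real \<Rightarrow> nat \<Rightarrow> nat set set \<Rightarrow> bool" where
  "quasirandom n eps h G \<longleftrightarrow>
     (\<forall>A. A \<subseteq> {1..n} \<and> card A \<le> h \<longrightarrow>
        (1 - eps) * density n G ^ card A * real n \<le> real (card (common_nbhd n G A)) \<and>
        real (card (common_nbhd n G A)) \<le> (1 + eps) * density n G ^ card A * real n)"

definition qr_systems :: "nat \<Rightarrow> real \<Rightarrow> nat \<Rightarrow> nat \<Rightarrow> nat set list set" where
  "qr_systems n eps h m = {S \<in> ordered_systems n m.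
      \<forall>i\<le>m. quasirandom n eps h (uncovered n (take i S))}"

definition triangles :: "nat \<Rightarrow> nat set set \<Rightarrow> nat set set" where
  "triangles n G = {T. T \<subseteq> {1..n} \<and> card T = 3 \<and> pairs_of T \<subseteq> G}"

text \<open>Triangle removal process: distribution of the ordered list of the first m removed
  triangles; None plays the role of the symbol * (process got stuck).\<close>
fun trp :: "nat \<Rightarrow> nat \<Rightarrow> nat set list option pmf" where
  "trp n 0 = return_pmf (Some [])"
| "trp n (Suc m) = bind_pmf (trp n m) (\<lambda>r. case r of
      None \<Rightarrow> return_pmf None
    | Some S \<Rightarrow> (if triangles n (uncovered n S) = {} then return_pmf None
                else map_pmf (\<lambda>T. Some (S @ [T])) (pmf_of_set (triangles n (uncovered n S)))))"

end

theory Submission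
  imports Defs
begin

lemma finite_pairs_of: "finite T \<Longrightarrow> finite (pairs_of T)"
  unfolding pairs_of_def by (rule finite_subset[of _ "Pow T"]) auto

lemma card_pairs_of3: assumes "card T = 3" shows "card (pairs_of T) = 3"
proof -
  obtain x y z where T: "T = {x,y,z}" "x\<noteq>y" "y\<noteq>z" "x\<noteq>z" using assms card_3_iff by metis
  have "pairs_of T = {{x,y},{x,z},{y,z}}"
    unfolding pairs_of_def T
  proof (intro set_eqI iffI)
    fix e assume "e \<in> {e. e \<subseteq> {x, y, z} \<and> card e = 2}"
    then have "e \<subseteq> {x,y,z}" "card e = 2" by auto
    then obtain u v where "e = {u,v}" "u \<noteq> v" using card_2_iff by metis
    then show "e \<in> {{x,y},{x,z},{y,z}}" using \<open>e \<subseteq> {x,y,z}\<close> by auto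
  next
    fix e assume "e \<in> {{x,y},{x,z},{y,z}}"
    then show "e \<in> {e. e \<subseteq> {x, y, z} \<and> card e = 2}" using T by auto
  qed
  moreover have "card {{x,y},{x,z},{y,z}} = 3"
    using T by (auto simp: doubleton_eq_iff card_insert_if)
  ultimately show ?thesis by simp
qed

lemma finite_triangles: "finite (triangles n G)"
  unfolding triangles_def by (rule finite_subset[of _ "Pow {1..n}"]) auto

lemma triangle_in:
  assumes S: "S \<in> ordered_systems n m" and i: "i < m"
  shows "S ! i \<in> triangles n (uncovered n (take i S))"
proof -
  have len: "length S = m" and t: "S ! i \<subseteq> {1..n}" "card (S!i) = 3"
    and dis: "\<And>j. j < m \<Longrightarrow> j \<noteq> i \<Longrightarrow> card (S!i \<inter> S!j) \<le> 1"
    using S i unfolding ordered_systems_def by auto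
  have "pairs_of (S!i) \<subseteq> uncovered n (take i S)"
  proof
    fix e assume e: "e \<in> pairs_of (S!i)"
    then have e2: "e \<subseteq> S!i" "card e = 2" unfolding pairs_of_def by auto
    have "e \<in> pairs_of {1..n}" using e2 t unfolding pairs_of_def by auto
    moreover have "e \<notin> pairs_of T" if "T \<in> set (take i S)" for T
    proof
      assume "e \<in> pairs_of T"
      then have "e \<subseteq> T" unfolding pairs_of_def by auto
      from that obtain j where j: "j < i" "T = S ! j" using len i
        by (auto simp: in_set_conv_nth)
      have "e \<subseteq> S!i \<inter> S!j" using e2 \<open>e \<subseteq> T\<close> j by auto
      moreover have "finite (S!i)" using t(2) by (metis card.infinite zero_neq_numeral)
      ultimately have "card e \<le> card (S!i \<inter> S!j)" by (meson card_mono finite_Int)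
      with dis[of j] j i e2 show False by auto
    qed
    ultimately show "e \<in> uncovered n (take i S)" unfolding uncovered_def by auto
  qed
  then show ?thesis using t unfolding triangles_def by auto
qed

lemma ordered_take: "S \<in> ordered_systems n (Suc m) \<Longrightarrow> take m S \<in> ordered_systems n m"
  unfolding ordered_systems_def by auto

lemma pmf_trp:
  "S \<in> ordered_systems n m \<Longrightarrow>
   pmf (trp n m) (Some S) = (\<Prod>i<m. 1 / real (card (triangles n (uncovered n (take i S)))))"
proof (induction m arbitrary: S)
  case 0
  then have "S = []" unfolding ordered_systems_def by auto
  then show ?case by simp
next
  case (Suc m)
  define S0 where "S0 = take m S"
  define T where "T = S ! m"
  have len: "length S = Suc m" using Suc.prems unfolding ordered_systems_def by auto
  have SS: "S = S0 @ [T]" unfolding S0_def T_def using len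
    by (metis lessI take_Suc_conv_app_nth take_all order_refl)
  have S0o: "S0 \<in> ordered_systems n m" unfolding S0_def using Suc.prems by (rule ordered_take)
  have Tin: "T \<in> triangles n (uncovered n S0)"
    unfolding T_def S0_def using triangle_in[OF Suc.prems, of m] by simp
  define Tr where "Tr = triangles n (uncovered n S0)"
  define c where "c = 1 / real (card Tr)"
  define f where "f = (\<lambda>r. case r of
      None \<Rightarrow> return_pmf None
    | Some S \<Rightarrow> (if triangles n (uncovered n S) = {} then return_pmf None
                else map_pmf (\<lambda>T. Some (S @ [T])) (pmf_of_set (triangles n (uncovered n S)))))"
  have trp: "trp n (Suc m) = bind_pmf (trp n m) f" unfolding f_def by simp
  have fy: "pmf (f y) (Some S) = c * indicator {Some S0} y" for y
  proof (cases y)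
    case None then show ?thesis unfolding f_def by simp
  next
    case (Some S1)
    show ?thesis
    proof (cases "S1 = S0")
      case True
      have ne: "Tr \<noteq> {}" using Tin Tr_def by auto
      have inj: "inj (\<lambda>T. Some (S0 @ [T]))" by (rule injI) auto
      have "pmf (f y) (Some S) = pmf (map_pmf (\<lambda>T. Some (S0 @ [T])) (pmf_of_set Tr)) (Some (S0 @ [T]))"
        unfolding f_def Some True SS using ne Tr_def by simp
      also have "\<dots> = pmf (pmf_of_set Tr) T" by (rule pmf_map_inj'[OF inj])
      also have "\<dots> = c" unfolding c_def using Tin ne Tr_def finite_triangles by simp
      finally show ?thesis using Some True by simp
    next
      case False
      have "pmf (f y) (Some S) = 0"
        unfolding f_def Some SS using False
        by (auto simp: pmf_eq_0_set_pmf)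
      then show ?thesis using Some False by simp
    qed
  qed
  have "pmf (trp n (Suc m)) (Some S) = measure_pmf.expectation (trp n m) (\<lambda>y. c * indicator {Some S0} y)"
    unfolding trp pmf_bind fy ..
  also have "\<dots> = c * pmf (trp n m) (Some S0)"
    by (simp add: measure_pmf_single)
  also have "\<dots> = c * (\<Prod>i<m. 1 / real (card (triangles n (uncovered n (take i S0)))))"
    using Suc.IH[OF S0o] by simp
  also have "\<dots> = (\<Prod>i<Suc m. 1 / real (card (triangles n (uncovered n (take i S)))))"
    unfolding c_def Tr_def S0_def by (simp add: mult.commute)
  finally show ?case .
qed

lemma card_pairs_all: "card (pairs_of {1..n}) = n choose 2"
  unfolding pairs_of_def using n_subsets[of "{1..n}" 2] by simp

lemma card_uncovered:
  assumes S: "S \<in> ordered_systems n m" and i: "i \<le> m"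
  shows "card (uncovered n (take i S)) = (n choose 2) - 3 * i"
proof -
  have len: "length S = m" and t: "\<And>j. j < m \<Longrightarrow> S ! j \<subseteq> {1..n} \<and> card (S ! j) = 3"
    and dis: "\<And>j k. j < m \<Longrightarrow> k < m \<Longrightarrow> j \<noteq> k \<Longrightarrow> card (S!j \<inter> S!k) \<le> 1"
    using S unfolding ordered_systems_def by auto
  define L where "L = take i S"
  have lenL: "length L = i" using len i L_def by simp
  have Lnth: "\<And>j. j < i \<Longrightarrow> L ! j = S ! j" using L_def by simp
  have fin3: "\<And>j. j < m \<Longrightarrow> finite (S!j)" using t by (metis card.infinite zero_neq_numeral)
  have distinct: "distinct L"
    unfolding distinct_conv_nth
  proof (intro allI impI)
    fix j k assume "j < length L" "k < length L" "j \<noteq> k"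
    then have jk: "j < m" "k < m" "j < i" "k < i" using lenL i by auto
    show "L ! j \<noteq> L ! k"
    proof
      assume "L ! j = L ! k"
      then have "S!j \<inter> S!k = S!j" using Lnth jk by auto
      then show False using dis[of j k] t[of j] jk \<open>j \<noteq> k\<close> by auto
    qed
  qed
  have setL: "\<And>T. T \<in> set L \<Longrightarrow> \<exists>j<i. T = S ! j"
    using lenL Lnth by (auto simp: in_set_conv_nth)
  have disj: "\<forall>T\<in>set L. \<forall>T'\<in>set L. T \<noteq> T' \<longrightarrow> pairs_of T \<inter> pairs_of T' = {}"
  proof (intro ballI impI)
    fix T T' assume TT: "T \<in> set L" "T' \<in> set L" "T \<noteq> T'"
    obtain j where j: "j < i" "T = S!j" using setL TT by blast
    obtain k where k: "k < i" "T' = S!k" using setL TT by blast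
    have "j \<noteq> k" using j k TT by auto
    show "pairs_of T \<inter> pairs_of T' = {}"
    proof (rule ccontr)
      assume "pairs_of T \<inter> pairs_of T' \<noteq> {}"
      then obtain e where "e \<subseteq> T" "e \<subseteq> T'" "card e = 2" unfolding pairs_of_def by auto
      then have "card e \<le> card (S!j \<inter> S!k)" using j k fin3[of j] i
        by (intro card_mono) auto
      then show False using dis[of j k] j k i \<open>j \<noteq> k\<close> \<open>card e = 2\<close> by auto
    qed
  qed
  have finT: "\<forall>T\<in>set L. finite (pairs_of T)"
  proof
    fix T assume "T \<in> set L"
    then obtain j where "j < i" "T = S!j" using setL by blast
    then show "finite (pairs_of T)" using fin3[of j] i by (simp add: finite_pairs_of)
  qed
  have cardU: "card (\<Union>T\<in>set L. pairs_of T) = 3 * i"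
  proof -
    have "card (\<Union>T\<in>set L. pairs_of T) = (\<Sum>T\<in>set L. card (pairs_of T))"
      by (rule card_UN_disjoint[OF _ finT disj]) simp
    also have "\<dots> = (\<Sum>T\<in>set L. 3)"
    proof (rule sum.cong[OF refl])
      fix T assume "T \<in> set L"
      then obtain j where "j < i" "T = S!j" using setL by blast
      then show "card (pairs_of T) = 3" using t[of j] i by (simp add: card_pairs_of3)
    qed
    also have "\<dots> = 3 * i" using distinct_card[OF distinct] lenL by simp
    finally show ?thesis .
  qed
  have sub: "(\<Union>T\<in>set L. pairs_of T) \<subseteq> pairs_of {1..n}"
  proof
    fix e assume "e \<in> (\<Union>T\<in>set L. pairs_of T)"
    then obtain T where "T \<in> set L" "e \<in> pairs_of T" by blast
    moreover obtain j where "j < i" "T = S!j" using setL \<open>T \<in> set L\<close> by blast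
    ultimately show "e \<in> pairs_of {1..n}" using t[of j] i unfolding pairs_of_def by auto
  qed
  have "card (uncovered n L) = card (pairs_of {1..n}) - card (\<Union>T\<in>set L. pairs_of T)"
    unfolding uncovered_def using finT sub by (intro card_Diff_subset) auto
  then show ?thesis using cardU card_pairs_all L_def by simp
qed

lemma cn_bij:
  assumes G: "G \<subseteq> pairs_of {1..n}" and e: "e \<in> G"
  shows "card (common_nbhd n G e) = card {T \<in> triangles n G. e \<subseteq> T}"
proof -
  obtain u w where uw: "e = {u,w}" "u \<noteq> w" using e G unfolding pairs_of_def by (auto simp: card_2_iff)
  have uwn: "u \<in> {1..n}" "w \<in> {1..n}" using e G uw unfolding pairs_of_def by auto
  have Gp: "\<And>p. p \<in> G \<Longrightarrow> card p = 2" using G unfolding pairs_of_def by auto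
  have notin: "v \<notin> e" if "v \<in> common_nbhd n G e" for v
  proof
    assume "v \<in> e"
    then have "{v,v} \<in> G" using that unfolding common_nbhd_def by auto
    then show False using Gp[of "{v,v}"] by simp
  qed
  show ?thesis
  proof (rule bij_betw_same_card[of "\<lambda>v. insert v e"], unfold bij_betw_def, intro conjI)
    show "inj_on (\<lambda>v. insert v e) (common_nbhd n G e)"
    proof (rule inj_onI)
      fix v v' assume "v \<in> common_nbhd n G e" "v' \<in> common_nbhd n G e" "insert v e = insert v' e"
      then show "v = v'" using notin by (metis insertE insertI1)
    qed
    show "(\<lambda>v. insert v e) ` common_nbhd n G e = {T \<in> triangles n G. e \<subseteq> T}"
    proof (intro set_eqI iffI)
      fix T assume "T \<in> (\<lambda>v. insert v e) ` common_nbhd n G e"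
      then obtain v where v: "v \<in> common_nbhd n G e" "T = insert v e" by blast
      have vn: "v \<in> {1..n}" "{v,u} \<in> G" "{v,w} \<in> G" using v(1) uw unfolding common_nbhd_def by auto
      have vne: "v \<noteq> u" "v \<noteq> w" using notin[OF v(1)] uw by auto
      have T3: "T = {v,u,w}" using v uw by auto
      have "pairs_of T \<subseteq> G"
      proof
        fix p assume "p \<in> pairs_of T"
        then have "p \<subseteq> {v,u,w}" "card p = 2" unfolding pairs_of_def T3 by auto
        then obtain x y where "p = {x,y}" "x \<noteq> y" "x \<in> {v,u,w}" "y \<in> {v,u,w}"
          by (auto simp: card_2_iff)
        then have "p = {v,u} \<or> p = {v,w} \<or> p = {u,w}" by auto
        then show "p \<in> G" using vn e uw by (auto simp: insert_commute)
      qed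
      moreover have "card T = 3" using T3 vne uw by simp
      moreover have "T \<subseteq> {1..n}" using T3 vn uwn by auto
      ultimately show "T \<in> {T \<in> triangles n G. e \<subseteq> T}" unfolding triangles_def using v by auto
    next
      fix T assume T: "T \<in> {T \<in> triangles n G. e \<subseteq> T}"
      then have T3: "card T = 3" "e \<subseteq> T" "T \<subseteq> {1..n}" "pairs_of T \<subseteq> G"
        unfolding triangles_def by auto
      have finT: "finite T" using T3(1) by (metis card.infinite zero_neq_numeral)
      have "card (T - e) = 1" using T3 uw finT by (simp add: card_Diff_subset)
      then obtain v where v: "T - e = {v}" by (auto simp: card_1_singleton_iff)
      have Tv: "T = insert v e" using v T3(2) by auto
      have "v \<in> common_nbhd n G e"
        unfolding common_nbhd_def
      proof (intro CollectI conjI ballI)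
        show "v \<in> {1..n}" using Tv T3 by auto
        fix x assume "x \<in> e"
        moreover have "v \<notin> e" using v by auto
        ultimately have "{v,x} \<in> pairs_of T" unfolding pairs_of_def Tv
          by (auto simp: card_2_iff)
        then show "{v,x} \<in> G" using T3 by auto
      qed
      then show "T \<in> (\<lambda>v. insert v e) ` common_nbhd n G e" using Tv by blast
    qed
  qed
qed

lemma triangle_count:
  assumes G: "G \<subseteq> pairs_of {1..n}"
  shows "(\<Sum>e\<in>G. card (common_nbhd n G e)) = 3 * card (triangles n G)"
proof -
  have finG: "finite G" using G finite_pairs_of[of "{1..n}"] finite_subset by auto
  have Gp: "\<And>p. p \<in> G \<Longrightarrow> card p = 2" using G unfolding pairs_of_def by auto
  have "3 * card (triangles n G) = (\<Sum>T\<in>triangles n G. card (pairs_of T))"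
    by (simp add: triangles_def card_pairs_of3)
  also have "\<dots> = (\<Sum>T\<in>triangles n G. \<Sum>e\<in>G. if e \<subseteq> T then 1 else 0)"
  proof (rule sum.cong[OF refl])
    fix T assume T: "T \<in> triangles n G"
    have "pairs_of T = {e \<in> G. e \<subseteq> T}"
      using T Gp unfolding triangles_def pairs_of_def by auto
    then show "card (pairs_of T) = (\<Sum>e\<in>G. if e \<subseteq> T then 1 else 0)"
      using finG by (simp add: sum.inter_filter[symmetric])
  qed
  also have "\<dots> = (\<Sum>e\<in>G. \<Sum>T\<in>triangles n G. if e \<subseteq> T then 1 else 0)"
    by (rule sum.swap)
  also have "\<dots> = (\<Sum>e\<in>G. card (common_nbhd n G e))"
  proof (rule sum.cong[OF refl])
    fix e assume "e \<in> G"
    then show "(\<Sum>T\<in>triangles n G. if e \<subseteq> T then 1 else 0) = card (common_nbhd n G e)"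
      using cn_bij[OF G] finite_triangles by (simp add: sum.inter_filter[symmetric])
  qed
  finally show ?thesis by simp
qed

lemma tri_bounds:
  assumes G: "G \<subseteq> pairs_of {1..n}" and Q: "quasirandom n eps 2 G"
  shows "(1 - eps) * (real (card G) * density n G ^ 2 * real n) \<le> 3 * real (card (triangles n G))"
    and "3 * real (card (triangles n G)) \<le> (1 + eps) * (real (card G) * density n G ^ 2 * real n)"
proof -
  have eq: "3 * real (card (triangles n G)) = (\<Sum>e\<in>G. real (card (common_nbhd n G e)))"
    using triangle_count[OF G] by (metis of_nat_mult of_nat_numeral of_nat_sum)
  have b: "(1 - eps) * density n G ^ 2 * real n \<le> real (card (common_nbhd n G e)) \<and>
           real (card (common_nbhd n G e)) \<le> (1 + eps) * density n G ^ 2 * real n" if "e \<in> G" for e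
  proof -
    have "e \<subseteq> {1..n}" "card e = 2" using that G unfolding pairs_of_def by auto
    moreover have "\<forall>A. A \<subseteq> {1..n} \<and> card A \<le> 2 \<longrightarrow>
        (1 - eps) * density n G ^ card A * real n \<le> real (card (common_nbhd n G A)) \<and>
        real (card (common_nbhd n G A)) \<le> (1 + eps) * density n G ^ card A * real n"
      using Q unfolding quasirandom_def .
    ultimately show ?thesis by (metis order_refl)
  qed
  have "(1 - eps) * (real (card G) * density n G ^ 2 * real n) = (\<Sum>e\<in>G. (1 - eps) * density n G ^ 2 * real n)"
    by simp
  also have "\<dots> \<le> (\<Sum>e\<in>G. real (card (common_nbhd n G e)))"
    by (rule sum_mono) (use b in blast)
  finally show "(1 - eps) * (real (card G) * density n G ^ 2 * real n) \<le> 3 * real (card (triangles n G))"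
    using eq by simp
  have "(\<Sum>e\<in>G. real (card (common_nbhd n G e))) \<le> (\<Sum>e\<in>G. (1 + eps) * density n G ^ 2 * real n)"
    by (rule sum_mono) (use b in blast)
  also have "\<dots> = (1 + eps) * (real (card G) * density n G ^ 2 * real n)" by simp
  finally show "3 * real (card (triangles n G)) \<le> (1 + eps) * (real (card G) * density n G ^ 2 * real n)"
    using eq by simp
qed

lemma ratio_bound:
  fixes t t' K eps :: real
  assumes "0 \<le> eps" "eps < 1" "t > 0" "t' \<ge> 0" "(1 - eps) * K \<le> 3 * t" "3 * t' \<le> (1 + eps) * K"
  shows "t' / t \<le> (1 + eps) / (1 - eps)"
proof -
  have "(3 * t') * (1 - eps) \<le> ((1 + eps) * K) * (1 - eps)"
    using assms by (intro mult_right_mono) auto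
  then have "t' * (1 - eps) * 3 \<le> (1 + eps) * K * (1 - eps)" by (simp add: algebra_simps)
  also have "\<dots> = (1 + eps) * ((1 - eps) * K)" by simp
  also have "\<dots> \<le> (1 + eps) * (3 * t)" using assms by (intro mult_left_mono) auto
  finally have "t' * (1 - eps) \<le> (1 + eps) * t" by simp
  then show ?thesis using assms by (simp add: divide_simps)
qed

lemma q_exp:
  fixes eps :: real
  assumes "0 \<le> eps" "eps \<le> 1/2"
  shows "(1 + eps) / (1 - eps) \<le> exp (3 * eps)"
proof -
  have a: "1 + eps \<le> exp eps" by (rule exp_ge_add_one_self)
  have "1 + 2 * eps \<le> exp (2 * eps)" using exp_ge_add_one_self[of "2*eps"] by simp
  then have "(1 - eps) * (1 + 2 * eps) \<le> (1 - eps) * exp (2 * eps)"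
    using assms by (intro mult_left_mono) auto
  moreover have "eps * (2 * eps) \<le> eps * 1" using assms by (intro mult_left_mono) auto
  then have "1 \<le> (1 - eps) * (1 + 2 * eps)" by (simp add: algebra_simps)
  ultimately have b: "1 \<le> (1 - eps) * exp (2 * eps)" by linarith
  have "1 + eps \<le> exp eps * ((1 - eps) * exp (2 * eps))"
  proof -
    have c: "exp eps * 1 \<le> exp eps * ((1 - eps) * exp (2 * eps))"
      using b by (intro mult_left_mono) auto
    show ?thesis using a c by linarith
  qed
  also have "\<dots> = (1 - eps) * exp (3 * eps)" by (simp add: exp_add[symmetric] algebra_simps)
  finally show ?thesis using assms by (simp add: divide_simps mult.commute)
qed

theorem lemma2p7:
  fixes a \<alpha> :: real
  assumes "0 < a" "a < 2" "0 \<le> \<alpha>" "\<alpha> \<le> 1"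
  shows "\<exists>C::real. \<exists>n0::nat. \<forall>n\<ge>n0. (n mod 6 = 1 \<or> n mod 6 = 3) \<longrightarrow>
           (let m = nat \<lfloor>\<alpha> * real (Nsys n)\<rfloor>; eps = real n powr (- a) in
            \<forall>S S'. S \<in> qr_systems n eps 2 m \<and> S' \<in> qr_systems n eps 2 m \<longrightarrow>
              pmf (trp n m) (Some S) / pmf (trp n m) (Some S') \<le> exp (C * real n powr (2 - a)))"
proof -
  have "((\<lambda>n. real n powr (- a)) \<longlongrightarrow> 0) sequentially"
    using assms(1) by (intro tendsto_neg_powr filterlim_real_sequentially) auto
  then have "eventually (\<lambda>n. real n powr (- a) < 1/2) sequentially"
    by (rule order_tendstoD) simp
  then obtain N where N: "\<And>n. n \<ge> N \<Longrightarrow> real n powr (- a) < 1/2"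
    unfolding eventually_sequentially by blast
  show ?thesis
  proof (intro exI allI impI)
    fix n :: nat assume n: "n \<ge> max N 1"
    define m where "m = nat \<lfloor>\<alpha> * real (Nsys n)\<rfloor>"
    define eps where "eps = real n powr (- a)"
    have n1: "n \<ge> 1" using n by simp
    have eps0: "0 \<le> eps" "eps \<le> 1/2" using N[of n] n unfolding eps_def by auto
    show "let m = nat \<lfloor>\<alpha> * real (Nsys n)\<rfloor>; eps = real n powr (- a) in
            \<forall>S S'. S \<in> qr_systems n eps 2 m \<and> S' \<in> qr_systems n eps 2 m \<longrightarrow>
              pmf (trp n m) (Some S) / pmf (trp n m) (Some S') \<le> exp (3 * real n powr (2 - a))"
      unfolding Let_def m_def[symmetric] eps_def[symmetric]
    proof (intro allI impI, elim conjE)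
      fix S S' assume SQ: "S \<in> qr_systems n eps 2 m" and SQ': "S' \<in> qr_systems n eps 2 m"
      have So: "S \<in> ordered_systems n m" and S'o: "S' \<in> ordered_systems n m"
        using SQ SQ' unfolding qr_systems_def by auto
      define t where "t i = real (card (triangles n (uncovered n (take i S))))" for i
      define t' where "t' i = real (card (triangles n (uncovered n (take i S'))))" for i
      have tpos: "t i > 0" if "i < m" for i
        using triangle_in[OF So that] finite_triangles unfolding t_def
        by (metis card_gt_0_iff empty_iff of_nat_0_less_iff)
      have t'pos: "t' i > 0" if "i < m" for i
        using triangle_in[OF S'o that] finite_triangles unfolding t'_def
        by (metis card_gt_0_iff empty_iff of_nat_0_less_iff)
      have rb: "t' i / t i \<le> (1 + eps) / (1 - eps)" if i: "i < m" for i
      proof -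
        define G where "G = uncovered n (take i S)"
        define G' where "G' = uncovered n (take i S')"
        have GG: "G \<subseteq> pairs_of {1..n}" "G' \<subseteq> pairs_of {1..n}"
          unfolding G_def G'_def uncovered_def by auto
        have Q: "quasirandom n eps 2 G" "quasirandom n eps 2 G'"
          using SQ SQ' i unfolding qr_systems_def G_def G'_def by auto
        have cG: "card G = card G'"
          unfolding G_def G'_def using card_uncovered[OF So, of i] card_uncovered[OF S'o, of i] i by simp
        then have dG: "density n G = density n G'" unfolding density_def by simp
        show ?thesis
          apply (rule ratio_bound[where K = "real (card G) * density n G ^ 2 * real n"])
          using eps0 tpos[OF i] tri_bounds(1)[OF GG(1) Q(1)] tri_bounds(2)[OF GG(2) Q(2)] cG dG
          unfolding t_def t'_def G_def G'_def by auto
      qed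
      have "pmf (trp n m) (Some S) / pmf (trp n m) (Some S') = (\<Prod>i<m. 1 / t i) / (\<Prod>i<m. 1 / t' i)"
        unfolding pmf_trp[OF So] pmf_trp[OF S'o] t_def t'_def ..
      also have "\<dots> = (\<Prod>i<m. t' i / t i)"
        by (simp add: prod_dividef[symmetric])
      also have "\<dots> \<le> (\<Prod>i<m. (1 + eps) / (1 - eps))"
        by (rule prod_mono) (use rb tpos t'pos in \<open>auto intro: less_imp_le\<close>)
      also have "\<dots> = ((1 + eps) / (1 - eps)) ^ m" by simp
      also have "\<dots> \<le> exp (3 * eps) ^ m"
        using q_exp[OF eps0] eps0 by (intro power_mono) auto
      also have "\<dots> = exp (real m * (3 * eps))" by (simp add: exp_of_nat_mult)
      also have "\<dots> \<le> exp (3 * real n powr (2 - a))"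
      proof -
        have "m \<le> Nsys n"
        proof -
          have "\<alpha> * real (Nsys n) \<le> real (Nsys n)" using assms by (simp add: mult_left_le_one_le)
          then show ?thesis unfolding m_def by linarith
        qed
        also have "Nsys n \<le> n choose 2" unfolding Nsys_def by simp
        also have "\<dots> \<le> n ^ 2"
          by (cases "2 \<le> n") (auto intro: binomial_le_pow simp: binomial_eq_0)
        finally have "real m \<le> real n ^ 2" by (metis of_nat_le_iff of_nat_power)
        then have "real m * eps \<le> real n ^ 2 * eps" using eps0 by (intro mult_right_mono) auto
        also have "\<dots> = real n powr (2 - a)"
        proof -
          have "real n ^ 2 = real n powr 2" using n1 by (simp add: powr_realpow)
          then have "real n ^ 2 * eps = real n powr 2 * real n powr (- a)" unfolding eps_def by simp
          also have "\<dots> = real n powr (2 + - a)" by (rule powr_add[symmetric])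
          finally show ?thesis by simp
        qed
        finally show ?thesis by simp
      qed
      finally show "pmf (trp n m) (Some S) / pmf (trp n m) (Some S') \<le> exp (3 * real n powr (2 - a))" .
    qed
  qed
qed

end
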